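(* In the setting of the context, let $\phi:F(G)\to\coprod_A G_\lambda$ be the unique homomorphism with $\phi(g)=g$ for all $g\in G$ (it is surjective and $1$-Lipschitz from $(F(G),d_F)$ to $(\coprod_A G_\lambda,\underline d)$), let $\mathfrak N=\ker\phi$, and let $d_0$ be the factor metric on $F(G)/\mathfrak N$. Then the isomorphism $F(G)/\mathfrak N\to\coprod_A G_\lambda$ induced by $\phi$ is an isometry from $(F(G)/\mathfrak N,d_0)$ onto $(\coprod_A G_\lambda,\underline d)$.
   Context: Setting: $(G_\lambda,d_\lambda)_{\lambda\in\Lambda}$ are groups with two-sided invariant metrics, $A$ is a common subgroup closed in every $G_\lambda$, $G_{\lambda_1}\cap G_{\lambda_2}=A$ for $\lambda_1\ne\lambda_2$, all $d_\lambda$ agree on $A$; $G=\bigcup_\lambda G_\lambda$ with the amalgam metric $d$ ($d=d_\lambda$ on $G_\lambda$; $d(f_1,f_2)=\inf_{a\in A}\{d_{\lambda_1}(f_1,a)+d_{\lambda_2}(a,f_2)\}$ if $f_1\in G_{\lambda_1}$, $f_2\in G_{\lambda_2}$ are not in a common $G_\lambda$), and $\underline d$ is the Graev metric on $\coprod_A G_\lambda$: $\underline d(f_1,f_2)=\inf\{\sum_i d(\alpha_1(i),\alpha_2(i)) : |\alpha_1|=|\alpha_2|,\ \hat\alpha_i=f_i\}$ over words in the alphabet $G$, $\hat\alpha$ being the product of the letters. Graev metric on free groups: for a pointed metric space $(X,e,d)$, let $X^{-1}$ be a set of formal inverses with $e^{-1}=e$, $X\cap X^{-1}=\{e\}$,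 and $\overline X=X\cup X^{-1}$ with metric $d(x^{-1},y^{-1})=d(x,y)$, $d(x,y^{-1})=d(x,e)+d(e,y)$ for $x,y\in X$. $F(X)$ is the free group on $X\setminus\{e\}$ (with $e$ interpreted as the identity); for a word $u$ over $\overline X$, $\hat u\in F(X)$ is its evaluation. For words $u,v$ of equal length $\rho(u,v)=\sum_i d(u(i),v(i))$, and $d_F(f,g)=\inf\{\rho(u,v):|u|=|v|,\hat u=f,\hat v=g\}$; this is a two-sided invariant metric on $F(X)$. Here $X=G$ pointed at the identity $e$ with the amalgam metric $d$. Factor metric: for a group $H$ with two-sided invariant metric $\delta$ and closed normal subgroup $N$, $d_0(g_1N,g_2N)=\inf\{\delta(g_1h_1,g_2h_2):h_1,h_2\in N\}$. *)

theory Defs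
  imports "HOL-Analysis.Analysis" "HOL-Algebra.Algebra"
begin

text \<open>A letter of the alphabet X-bar is a pair (s, x): (True, x) is x and (False, x) is
  the formal inverse of x. Both (True, e) and (False, e) denote e (distance 0 apart under
  the metric below, consistent with e^-1 = e).\<close>

definition letter_dist :: "('a \<Rightarrow> 'a \<Rightarrow> real) \<Rightarrow> 'a \<Rightarrow> bool \<times> 'a \<Rightarrow> bool \<times> 'a \<Rightarrow> real" where
  "letter_dist d e p q =
     (if fst p = fst q then d (snd p) (snd q) else d (snd p) e + d e (snd q))"

fun free_red :: "(bool \<times> 'a) list \<Rightarrow> (bool \<times> 'a) list" where
  "free_red [] = []"
| "free_red (a # w) =
     (case free_red w of
        [] \<Rightarrow> [a]
      | b # w' \<Rightarrow> (if fst a \<noteq> fst b \<and> snd a = snd b then w' else a # b # w'))"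

definition free_grp :: "'a set \<Rightarrow> 'a \<Rightarrow> (bool \<times> 'a) list monoid" where
  "free_grp Y e =
     \<lparr> carrier = {w. snd ` set w \<subseteq> Y - {e} \<and> free_red w = w},
       monoid.mult = (\<lambda>u v. free_red (u @ v)),
       monoid.one = [] \<rparr>"

definition word_eval :: "'a \<Rightarrow> (bool \<times> 'a) list \<Rightarrow> (bool \<times> 'a) list" where
  "word_eval e u = free_red (filter (\<lambda>p. snd p \<noteq> e) u)"

definition word_rho :: "('a \<Rightarrow> 'a \<Rightarrow> real) \<Rightarrow> 'a \<Rightarrow> (bool \<times> 'a) list \<Rightarrow> (bool \<times> 'a) list \<Rightarrow> real" where
  "word_rho d e u v = (\<Sum>i<length u. letter_dist d e (u ! i) (v ! i))"

definition graev_free ::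
  "'a set \<Rightarrow> 'a \<Rightarrow> ('a \<Rightarrow> 'a \<Rightarrow> real) \<Rightarrow> (bool \<times> 'a) list \<Rightarrow> (bool \<times> 'a) list \<Rightarrow> real" where
  "graev_free Y e d f g =
     Inf {word_rho d e u v | u v. length u = length v \<and>
            snd ` set u \<subseteq> Y \<and> snd ` set v \<subseteq> Y \<and>
            word_eval e u = f \<and> word_eval e v = g}"

definition factor_metric :: "('b \<Rightarrow> 'b \<Rightarrow> real) \<Rightarrow> 'b set \<Rightarrow> 'b set \<Rightarrow> real" where
  "factor_metric \<delta> C1 C2 = Inf {\<delta> x y | x y. x \<in> C1 \<and> y \<in> C2}"

definition amalg_set :: "('i \<Rightarrow> 'a monoid) \<Rightarrow> 'a set" where
  "amalg_set Gs = (\<Union>l. carrier (Gs l))"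

definition amalg_unit :: "('i \<Rightarrow> 'a monoid) \<Rightarrow> 'a" where
  "amalg_unit Gs = \<one>\<^bsub>Gs (SOME l. True)\<^esub>"

definition amalg_dist :: "('i \<Rightarrow> 'a monoid) \<Rightarrow> ('i \<Rightarrow> 'a \<Rightarrow> 'a \<Rightarrow> real) \<Rightarrow> 'a set \<Rightarrow> 'a \<Rightarrow> 'a \<Rightarrow> real" where
  "amalg_dist Gs ds A x y =
     (if \<exists>l. x \<in> carrier (Gs l) \<and> y \<in> carrier (Gs l)
      then ds (SOME l. x \<in> carrier (Gs l) \<and> y \<in> carrier (Gs l)) x y
      else (INF a\<in>A. ds (SOME l. x \<in> carrier (Gs l)) x a + ds (SOME l. y \<in> carrier (Gs l)) a y))"

definition FG :: "('i \<Rightarrow> 'a monoid) \<Rightarrow> (bool \<times> 'a) list monoid" where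
  "FG Gs = free_grp (amalg_set Gs) (amalg_unit Gs)"

definition FG_gen :: "('i \<Rightarrow> 'a monoid) \<Rightarrow> 'a \<Rightarrow> (bool \<times> 'a) list" where
  "FG_gen Gs g = word_eval (amalg_unit Gs) [(True, g)]"

definition amalg_relators :: "('i \<Rightarrow> 'a monoid) \<Rightarrow> (bool \<times> 'a) list set" where
  "amalg_relators Gs =
     {FG_gen Gs g \<otimes>\<^bsub>FG Gs\<^esub> FG_gen Gs h \<otimes>\<^bsub>FG Gs\<^esub> inv\<^bsub>FG Gs\<^esub> (FG_gen Gs (g \<otimes>\<^bsub>Gs l\<^esub> h))
      | g h l. g \<in> carrier (Gs l) \<and> h \<in> carrier (Gs l)}"

definition normal_closure :: "('b, 'm) monoid_scheme \<Rightarrow> 'b set \<Rightarrow> 'b set" where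
  "normal_closure H S = generate H {x \<otimes>\<^bsub>H\<^esub> s \<otimes>\<^bsub>H\<^esub> inv\<^bsub>H\<^esub> x | x s. x \<in> carrier H \<and> s \<in> S}"

text \<open>The amalgamated free product, by its standard presentation:
  generators G minus e, relations g h = (gh) whenever g, h lie in a common G_lambda.\<close>
definition amalg_prod :: "('i \<Rightarrow> 'a monoid) \<Rightarrow> (bool \<times> 'a) list set monoid" where
  "amalg_prod Gs = FG Gs Mod normal_closure (FG Gs) (amalg_relators Gs)"

definition amalg_phi :: "('i \<Rightarrow> 'a monoid) \<Rightarrow> (bool \<times> 'a) list \<Rightarrow> (bool \<times> 'a) list set" where
  "amalg_phi Gs f = normal_closure (FG Gs) (amalg_relators Gs) #>\<^bsub>FG Gs\<^esub> f"

definition amalg_word_prod :: "('i \<Rightarrow> 'a monoid) \<Rightarrow> 'a list \<Rightarrow> (bool \<times> 'a) list set" where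
  "amalg_word_prod Gs \<alpha> =
     foldr (\<lambda>g acc. amalg_phi Gs (FG_gen Gs g) \<otimes>\<^bsub>amalg_prod Gs\<^esub> acc) \<alpha> \<one>\<^bsub>amalg_prod Gs\<^esub>"

definition graev_amalg ::
  "('i \<Rightarrow> 'a monoid) \<Rightarrow> ('i \<Rightarrow> 'a \<Rightarrow> 'a \<Rightarrow> real) \<Rightarrow> 'a set \<Rightarrow>
   (bool \<times> 'a) list set \<Rightarrow> (bool \<times> 'a) list set \<Rightarrow> real" where
  "graev_amalg Gs ds A f1 f2 =
     Inf {(\<Sum>i<length \<alpha>1. amalg_dist Gs ds A (\<alpha>1 ! i) (\<alpha>2 ! i)) | \<alpha>1 \<alpha>2.
            length \<alpha>1 = length \<alpha>2 \<and> set \<alpha>1 \<subseteq> amalg_set Gs \<and> set \<alpha>2 \<subseteq> amalg_set Gs \<and>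
            amalg_word_prod Gs \<alpha>1 = f1 \<and> amalg_word_prod Gs \<alpha>2 = f2}"

definition inv_metric :: "'a monoid \<Rightarrow> ('a \<Rightarrow> 'a \<Rightarrow> real) \<Rightarrow> bool" where
  "inv_metric H \<delta> \<longleftrightarrow>
     (\<forall>x\<in>carrier H. \<forall>y\<in>carrier H. (\<delta> x y = 0 \<longleftrightarrow> x = y) \<and> \<delta> x y = \<delta> y x) \<and>
     (\<forall>x\<in>carrier H. \<forall>y\<in>carrier H. \<forall>z\<in>carrier H. \<delta> x z \<le> \<delta> x y + \<delta> y z) \<and>
     (\<forall>g\<in>carrier H. \<forall>x\<in>carrier H. \<forall>y\<in>carrier H.
        \<delta> (g \<otimes>\<^bsub>H\<^esub> x) (g \<otimes>\<^bsub>H\<^esub> y) = \<delta> x y \<and> \<delta> (x \<otimes>\<^bsub>H\<^esub> g) (y \<otimes>\<^bsub>H\<^esub> g) = \<delta> x y)"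

definition metric_closed_in :: "'a set \<Rightarrow> ('a \<Rightarrow> 'a \<Rightarrow> real) \<Rightarrow> 'a set \<Rightarrow> bool" where
  "metric_closed_in S \<delta> A \<longleftrightarrow>
     (\<forall>x\<in>S. (\<forall>\<epsilon>>0. \<exists>a\<in>A. \<delta> x a < \<epsilon>) \<longrightarrow> x \<in> A)"

end

theory Submission
  imports Defs
begin


fun step :: "bool \<times> 'a \<Rightarrow> (bool \<times> 'a) list \<Rightarrow> (bool \<times> 'a) list" where
  "step a [] = [a]"
| "step a (b # w') = (if fst a \<noteq> fst b \<and> snd a = snd b then w' else a # b # w')"

lemma free_red_Cons: "free_red (a # w) = step a (free_red w)"
  by (cases "free_red w") auto

declare free_red.simps(2)[simp del] free_red_Cons[simp]

lemma free_red_foldr: "free_red w = foldr step w []"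
  by (induction w) simp_all

fun red :: "(bool \<times> 'a) list \<Rightarrow> bool" where
  "red [] = True" | "red [a] = True"
| "red (a # b # w) = (\<not>(fst a \<noteq> fst b \<and> snd a = snd b) \<and> red (b # w))"

lemma red_tl: "red (a # w) \<Longrightarrow> red w"
  by (cases w) auto

lemma red_step: "red w \<Longrightarrow> red (step a w)"
  by (cases w) (auto simp: step.simps dest: red_tl)

lemma red_foldr: "red z \<Longrightarrow> red (foldr step u z)"
  by (induction u) (auto simp: red_step)

lemma red_free_red: "red (free_red w)"
  unfolding free_red_foldr by (rule red_foldr) simp

lemma red_step_id: "red (a # w) \<Longrightarrow> step a w = a # w"
  by (cases w) (auto simp: step.simps)

lemma free_red_red: "red w \<Longrightarrow> free_red w = w"
proof (induction w)
  case (Cons a w)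
  then have "free_red w = w" using red_tl by blast
  then show ?case using Cons.prems by (simp add: red_step_id)
qed simp

lemma free_red_iff: "free_red w = w \<longleftrightarrow> red w"
  using free_red_red red_free_red by metis

definition flip :: "bool \<times> 'a \<Rightarrow> bool \<times> 'a" where "flip a = (\<not> fst a, snd a)"

lemma step_step_flip: "red w \<Longrightarrow> step a (step (flip a) w) = w"
proof (cases w)
  case Nil then show ?thesis by (simp add: step.simps flip_def)
next
  case (Cons b w')
  assume r: "red w"
  show ?thesis
  proof (cases "fst (flip a) \<noteq> fst b \<and> snd (flip a) = snd b")
    case True
    then have "b = a" by (cases a, cases b) (auto simp: flip_def)
    then have "red (a # w')" using r Cons by simp
    then show ?thesis using True Cons by (simp add: red_step_id flip_def prod_eq_iff)
  next
    case False
    then show ?thesis using Cons by (auto simp: flip_def)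
  qed
qed

lemma step_cancel: "red y \<Longrightarrow> fst a \<noteq> fst b \<and> snd a = snd b \<Longrightarrow> step a (step b y) = y"
  using step_step_flip[of y a] by (cases a, cases b) (auto simp: flip_def)

lemma free_red_append: "free_red (u @ v) = foldr step u (free_red v)"
  by (simp add: free_red_foldr)

lemma foldr_free_red: "red z \<Longrightarrow> foldr step u z = foldr step (free_red u) z"
proof (induction u)
  case (Cons a u)
  have IH: "foldr step u z = foldr step (free_red u) z" using Cons by blast
  define r where "r = free_red u"
  have rr: "red r" unfolding r_def by (rule red_free_red)
  have "step a (foldr step r z) = foldr step (step a r) z"
  proof (cases r)
    case Nil then show ?thesis by (simp add: step.simps)
  next
    case (Cons b r')
    show ?thesis
    proof (cases "fst a \<noteq> fst b \<and> snd a = snd b")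
      case True
      have "red (foldr step r' z)" using Cons.prems red_foldr by blast
      then show ?thesis using True \<open>r = b # r'\<close> step_cancel by simp
    next
      case False then show ?thesis using \<open>r = b # r'\<close> by auto
    qed
  qed
  then show ?case using IH by (simp add: free_red_foldr r_def)
qed simp

lemma free_red_idem: "free_red (free_red w) = free_red w"
  using free_red_red red_free_red by blast

lemma free_red_left: "free_red (free_red u @ v) = free_red (u @ v)"
  by (simp add: free_red_append foldr_free_red[OF red_free_red, symmetric] free_red_idem)

lemma free_red_right: "free_red (u @ free_red v) = free_red (u @ v)"
  by (simp add: free_red_append free_red_idem)

lemma set_step: "set (step a w) \<subseteq> insert a (set w)"
  by (cases w) (auto simp: step.simps)

lemma set_free_red: "set (free_red w) \<subseteq> set w"
proof (induction w)
  case (Cons a w) then show ?case using set_step[of a "free_red w"] by (auto simp: free_red_foldr)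
qed simp

definition winv :: "(bool \<times> 'a) list \<Rightarrow> (bool \<times> 'a) list" where
  "winv w = rev (map flip w)"

lemma free_red_winv: "free_red (w @ winv w) = []"
proof (induction w)
  case (Cons a w)
  have "free_red ((a # w) @ winv (a # w)) = step a (foldr step (w @ winv w) [flip a])"
    by (simp add: winv_def free_red_append)
  also have "\<dots> = step a (foldr step (free_red (w @ winv w)) [flip a])"
    using foldr_free_red[of "[flip a]"] by simp
  also have "\<dots> = []" using Cons by (simp add: step.simps flip_def)
  finally show ?case .
qed (simp add: winv_def)

lemma winv_winv: "winv (winv w) = w"
  by (simp add: winv_def rev_map flip_def comp_def)

lemma set_winv: "snd ` set (winv w) = snd ` set w"
  by (force simp: winv_def flip_def)

lemma free_grp_group: "group (free_grp Y e)"
proof (rule groupI)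
  fix x y assume "x \<in> carrier (free_grp Y e)" "y \<in> carrier (free_grp Y e)"
  then have "snd ` set (x @ y) \<subseteq> Y - {e}" by (auto simp: free_grp_def)
  moreover have "snd ` set (free_red (x @ y)) \<subseteq> snd ` set (x @ y)"
    using set_free_red[of "x @ y"] by blast
  ultimately have "snd ` set (free_red (x @ y)) \<subseteq> Y - {e}" by blast
  then show "x \<otimes>\<^bsub>free_grp Y e\<^esub> y \<in> carrier (free_grp Y e)"
    by (auto simp: free_grp_def free_red_idem)
next
  show "\<one>\<^bsub>free_grp Y e\<^esub> \<in> carrier (free_grp Y e)" by (simp add: free_grp_def)
next
  fix x y z
  show "x \<otimes>\<^bsub>free_grp Y e\<^esub> y \<otimes>\<^bsub>free_grp Y e\<^esub> z = x \<otimes>\<^bsub>free_grp Y e\<^esub> (y \<otimes>\<^bsub>free_grp Y e\<^esub> z)"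
    by (simp add: free_grp_def free_red_left free_red_right)
next
  fix x assume "x \<in> carrier (free_grp Y e)"
  then show "\<one>\<^bsub>free_grp Y e\<^esub> \<otimes>\<^bsub>free_grp Y e\<^esub> x = x" by (simp add: free_grp_def)
next
  fix x assume x: "x \<in> carrier (free_grp Y e)"
  show "\<exists>y\<in>carrier (free_grp Y e). y \<otimes>\<^bsub>free_grp Y e\<^esub> x = \<one>\<^bsub>free_grp Y e\<^esub>"
  proof (intro bexI)
    show "free_red (winv x) \<otimes>\<^bsub>free_grp Y e\<^esub> x = \<one>\<^bsub>free_grp Y e\<^esub>"
      using free_red_winv[of "winv x"] by (simp add: free_grp_def free_red_left winv_winv)
    show "free_red (winv x) \<in> carrier (free_grp Y e)"
    proof -
      have "snd ` set (free_red (winv x)) \<subseteq> snd ` set (winv x)"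
        using set_free_red[of "winv x"] by blast
      then show ?thesis using x set_winv[of x] by (auto simp: free_grp_def free_red_idem)
    qed
  qed
qed



locale amalg =
  fixes Gs :: "'i \<Rightarrow> 'a monoid"
    and ds :: "'i \<Rightarrow> 'a \<Rightarrow> 'a \<Rightarrow> real"
    and A :: "'a set"
  assumes groups: "\<And>l. group (Gs l)"
    and metrics: "\<And>l. inv_metric (Gs l) (ds l)"
    and subgrp: "\<And>l. subgroup A (Gs l)"
    and common_mult: "\<And>l1 l2 a b. a \<in> A \<Longrightarrow> b \<in> A \<Longrightarrow> a \<otimes>\<^bsub>Gs l1\<^esub> b = a \<otimes>\<^bsub>Gs l2\<^esub> b"
    and inter: "\<And>l1 l2. l1 \<noteq> l2 \<Longrightarrow> carrier (Gs l1) \<inter> carrier (Gs l2) = A"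
    and agree: "\<And>l1 l2 a b. a \<in> A \<Longrightarrow> b \<in> A \<Longrightarrow> ds l1 a b = ds l2 a b"
begin

abbreviation "e \<equiv> amalg_unit Gs"
abbreviation "d \<equiv> amalg_dist Gs ds A"
abbreviation "GG \<equiv> amalg_set Gs"

lemma A_sub: "A \<subseteq> carrier (Gs l)"
  by (rule subgroup.subset[OF subgrp])

lemma one_A: "\<one>\<^bsub>Gs l\<^esub> \<in> A"
  by (rule subgroup.one_closed[OF subgrp])

lemma inv_A: "a \<in> A \<Longrightarrow> inv\<^bsub>Gs l\<^esub> a \<in> A"
  by (rule subgroup.m_inv_closed[OF subgrp])

lemma mult_A: "a \<in> A \<Longrightarrow> b \<in> A \<Longrightarrow> a \<otimes>\<^bsub>Gs l\<^esub> b \<in> A"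
  by (rule subgroup.m_closed[OF subgrp])

lemma one_eq: "\<one>\<^bsub>Gs l\<^esub> = e"
proof -
  define l0 where "l0 = (SOME l::'i. True)"
  have e: "e = \<one>\<^bsub>Gs l0\<^esub>" by (simp add: amalg_unit_def l0_def)
  interpret g: group "Gs l" by (rule groups)
  interpret g0: group "Gs l0" by (rule groups)
  have x: "\<one>\<^bsub>Gs l0\<^esub> \<in> carrier (Gs l)" using A_sub[of l] one_A[of l0] by (rule subsetD)
  have "\<one>\<^bsub>Gs l0\<^esub> \<otimes>\<^bsub>Gs l\<^esub> \<one>\<^bsub>Gs l0\<^esub> = \<one>\<^bsub>Gs l0\<^esub> \<otimes>\<^bsub>Gs l0\<^esub> \<one>\<^bsub>Gs l0\<^esub>"
    by (rule common_mult[OF one_A one_A])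
  also have "\<dots> = \<one>\<^bsub>Gs l0\<^esub>" by (rule g0.l_one[OF g0.one_closed])
  also have "\<dots> = \<one>\<^bsub>Gs l0\<^esub> \<otimes>\<^bsub>Gs l\<^esub> \<one>\<^bsub>Gs l\<^esub>"
    using g.r_one[OF x] by (rule sym)
  finally have h0: "\<one>\<^bsub>Gs l0\<^esub> \<otimes>\<^bsub>Gs l\<^esub> \<one>\<^bsub>Gs l0\<^esub> = \<one>\<^bsub>Gs l0\<^esub> \<otimes>\<^bsub>Gs l\<^esub> \<one>\<^bsub>Gs l\<^esub>" .
  have h: "\<one>\<^bsub>Gs l0\<^esub> = \<one>\<^bsub>Gs l\<^esub>" by (rule g.l_cancel[OF h0 x g.one_closed x])
  show ?thesis by (rule trans[OF h[symmetric] e[symmetric]])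
qed

lemma e_A: "e \<in> A" unfolding amalg_unit_def by (rule one_A)

lemma e_carr: "e \<in> carrier (Gs l)" using e_A A_sub by blast

lemma carr_G: "x \<in> carrier (Gs l) \<Longrightarrow> x \<in> GG"
  by (auto simp: amalg_set_def)

lemma G_ex: "x \<in> GG \<Longrightarrow> x \<in> carrier (Gs (SOME l. x \<in> carrier (Gs l)))"
  by (auto simp: amalg_set_def intro: someI)

lemma two_A: "x \<in> carrier (Gs l1) \<Longrightarrow> x \<in> carrier (Gs l2) \<Longrightarrow> l1 \<noteq> l2 \<Longrightarrow> x \<in> A"
  using inter by blast

lemma inv_indep:
  assumes "g \<in> carrier (Gs l1)" "g \<in> carrier (Gs l2)"
  shows "inv\<^bsub>Gs l1\<^esub> g = inv\<^bsub>Gs l2\<^esub> g"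
proof (cases "l1 = l2")
  case False
  then have gA: "g \<in> A" using assms two_A by blast
  interpret g1: group "Gs l1" by (rule groups)
  interpret g2: group "Gs l2" by (rule groups)
  have iA: "inv\<^bsub>Gs l1\<^esub> g \<in> A" using inv_A gA by blast
  have "inv\<^bsub>Gs l1\<^esub> g \<otimes>\<^bsub>Gs l2\<^esub> g = inv\<^bsub>Gs l1\<^esub> g \<otimes>\<^bsub>Gs l1\<^esub> g"
    using common_mult gA iA by blast
  also have "\<dots> = \<one>\<^bsub>Gs l2\<^esub>" using assms one_eq by simp
  finally have "inv\<^bsub>Gs l2\<^esub> g = inv\<^bsub>Gs l1\<^esub> g"
    using iA A_sub assms by (intro g2.inv_equality) auto
  then show ?thesis by simp
qed simp

lemma ds_indep:
  assumes "x \<in> carrier (Gs l1)" "y \<in> carrier (Gs l1)" "x \<in> carrier (Gs l2)" "y \<in> carrier (Gs l2)"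
  shows "ds l1 x y = ds l2 x y"
  using assms two_A agree by (cases "l1 = l2") auto

lemma d_eq:
  assumes "x \<in> carrier (Gs l)" "y \<in> carrier (Gs l)"
  shows "d x y = ds l x y"
proof -
  have "\<exists>l. x \<in> carrier (Gs l) \<and> y \<in> carrier (Gs l)" using assms by blast
  moreover define l' where "l' = (SOME l. x \<in> carrier (Gs l) \<and> y \<in> carrier (Gs l))"
  ultimately have c: "x \<in> carrier (Gs l') \<and> y \<in> carrier (Gs l')" by (metis (mono_tags, lifting) someI_ex)
  have "d x y = ds l' x y" unfolding amalg_dist_def l'_def using \<open>\<exists>l. _\<close> by (simp only: if_True)
  also have "\<dots> = ds l x y" using c assms by (intro ds_indep) auto
  finally show ?thesis .
qed

lemma ds_sym: "x \<in> carrier (Gs l) \<Longrightarrow> y \<in> carrier (Gs l) \<Longrightarrow> ds l x y = ds l y x"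
  using metrics[of l] unfolding inv_metric_def by blast

lemma ds_tri: "x \<in> carrier (Gs l) \<Longrightarrow> y \<in> carrier (Gs l) \<Longrightarrow> z \<in> carrier (Gs l) \<Longrightarrow>
   ds l x z \<le> ds l x y + ds l y z"
  using metrics[of l] unfolding inv_metric_def by blast

lemma ds_zero: "x \<in> carrier (Gs l) \<Longrightarrow> ds l x x = 0"
  using metrics[of l] unfolding inv_metric_def by blast

lemma ds_nonneg: "x \<in> carrier (Gs l) \<Longrightarrow> y \<in> carrier (Gs l) \<Longrightarrow> 0 \<le> ds l x y"
  using ds_tri[of x l y x] ds_zero[of x l] ds_sym[of x l y] by linarith

lemma ds_left: "g \<in> carrier (Gs l) \<Longrightarrow> x \<in> carrier (Gs l) \<Longrightarrow> y \<in> carrier (Gs l) \<Longrightarrow>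
   ds l (g \<otimes>\<^bsub>Gs l\<^esub> x) (g \<otimes>\<^bsub>Gs l\<^esub> y) = ds l x y"
  using metrics[of l] unfolding inv_metric_def by blast

lemma ds_right: "g \<in> carrier (Gs l) \<Longrightarrow> x \<in> carrier (Gs l) \<Longrightarrow> y \<in> carrier (Gs l) \<Longrightarrow>
   ds l (x \<otimes>\<^bsub>Gs l\<^esub> g) (y \<otimes>\<^bsub>Gs l\<^esub> g) = ds l x y"
  using metrics[of l] unfolding inv_metric_def by blast

lemma ds_inv:
  assumes x: "x \<in> carrier (Gs l)" and y: "y \<in> carrier (Gs l)"
  shows "ds l (inv\<^bsub>Gs l\<^esub> x) (inv\<^bsub>Gs l\<^esub> y) = ds l x y"
proof -
  interpret g: group "Gs l" by (rule groups)
  have "ds l (x \<otimes>\<^bsub>Gs l\<^esub> inv\<^bsub>Gs l\<^esub> x) (x \<otimes>\<^bsub>Gs l\<^esub> inv\<^bsub>Gs l\<^esub> y) = ds l (inv\<^bsub>Gs l\<^esub> x) (inv\<^bsub>Gs l\<^esub> y)"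
    by (rule ds_left) (simp_all add: x y)
  then have "ds l (inv\<^bsub>Gs l\<^esub> x) (inv\<^bsub>Gs l\<^esub> y) =
        ds l (x \<otimes>\<^bsub>Gs l\<^esub> inv\<^bsub>Gs l\<^esub> x) (x \<otimes>\<^bsub>Gs l\<^esub> inv\<^bsub>Gs l\<^esub> y)" by simp
  also have "\<dots> = ds l \<one>\<^bsub>Gs l\<^esub> (x \<otimes>\<^bsub>Gs l\<^esub> inv\<^bsub>Gs l\<^esub> y)" using x y by simp
  also have "\<dots> = ds l (\<one>\<^bsub>Gs l\<^esub> \<otimes>\<^bsub>Gs l\<^esub> y) (x \<otimes>\<^bsub>Gs l\<^esub> inv\<^bsub>Gs l\<^esub> y \<otimes>\<^bsub>Gs l\<^esub> y)"
    by (rule ds_right[symmetric]) (simp_all add: x y)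
  also have "\<dots> = ds l y x" using x y by (simp add: g.m_assoc)
  finally show ?thesis using ds_sym x y by simp
qed

definition ginv :: "'a \<Rightarrow> 'a" where
  "ginv g = inv\<^bsub>Gs (SOME l. g \<in> carrier (Gs l))\<^esub> g"

lemma ginv_eq: "g \<in> carrier (Gs l) \<Longrightarrow> ginv g = inv\<^bsub>Gs l\<^esub> g"
proof -
  assume l: "g \<in> carrier (Gs l)"
  have "g \<in> carrier (Gs (SOME l. g \<in> carrier (Gs l)))" using l by (rule someI)
  then show ?thesis unfolding ginv_def by (rule inv_indep[OF _ l])
qed

lemma ginv_carr: "g \<in> carrier (Gs l) \<Longrightarrow> ginv g \<in> carrier (Gs l)"
  by (subst ginv_eq, assumption) (rule group.inv_closed[OF groups])

lemma ginv_G: "g \<in> GG \<Longrightarrow> ginv g \<in> GG"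
  by (rule carr_G[OF ginv_carr[OF G_ex]])

lemma ginv_ginv: "g \<in> GG \<Longrightarrow> ginv (ginv g) = g"
proof -
  assume "g \<in> GG"
  define l where "l = (SOME l. g \<in> carrier (Gs l))"
  have l: "g \<in> carrier (Gs l)" unfolding l_def using \<open>g \<in> GG\<close> by (rule G_ex)
  have "ginv (ginv g) = inv\<^bsub>Gs l\<^esub> (inv\<^bsub>Gs l\<^esub> g)"
    using ginv_eq[OF ginv_carr[OF l]] ginv_eq[OF l] by simp
  then show ?thesis using group.inv_inv[OF groups l] by simp
qed

lemma ginv_carr_rev: "g \<in> GG \<Longrightarrow> ginv g \<in> carrier (Gs l) \<Longrightarrow> g \<in> carrier (Gs l)"
proof -
  assume "g \<in> GG" "ginv g \<in> carrier (Gs l)"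
  then show ?thesis using ginv_carr[of "ginv g" l] ginv_ginv[of g] by simp
qed

lemma ginv_e: "ginv e = e"
  using ginv_eq[OF e_carr, of l] one_eq[of l, symmetric] monoid.inv_one[OF group.is_monoid[OF groups], of l] by simp

definition conv :: "bool \<times> 'a \<Rightarrow> 'a" where
  "conv p = (if fst p then snd p else ginv (snd p))"

lemma conv_G: "snd p \<in> GG \<Longrightarrow> conv p \<in> GG"
  by (simp add: conv_def ginv_G)

lemma d_nonneg: "x \<in> GG \<Longrightarrow> y \<in> GG \<Longrightarrow> 0 \<le> d x y"
proof -
  assume x: "x \<in> GG" and y: "y \<in> GG"
  show ?thesis
  proof (cases "\<exists>l. x \<in> carrier (Gs l) \<and> y \<in> carrier (Gs l)")
    case True
    then obtain l where l: "x \<in> carrier (Gs l)" "y \<in> carrier (Gs l)" by blast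
    then show ?thesis using d_eq[OF l] ds_nonneg[OF l] by simp
  next
    case False
    have "0 \<le> (INF a\<in>A. ds (SOME l. x \<in> carrier (Gs l)) x a + ds (SOME l. y \<in> carrier (Gs l)) a y)"
      using e_A G_ex[OF x] G_ex[OF y] A_sub
      by (intro cINF_greatest) (auto intro!: add_nonneg_nonneg ds_nonneg)
    moreover have "d x y = (INF a\<in>A. ds (SOME l. x \<in> carrier (Gs l)) x a + ds (SOME l. y \<in> carrier (Gs l)) a y)"
      unfolding amalg_dist_def using False by (rule if_not_P)
    ultimately show ?thesis by simp
  qed
qed

lemma d_split:
  assumes x: "x \<in> carrier (Gs lx)" and y: "y \<in> carrier (Gs ly)"
    and nc: "\<not> (\<exists>l. x \<in> carrier (Gs l) \<and> y \<in> carrier (Gs l))"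
  shows "d x y = (INF a\<in>A. ds lx x a + ds ly a y)"
proof -
  have 1: "x \<in> carrier (Gs (SOME l. x \<in> carrier (Gs l)))" using x by (rule someI)
  have 2: "y \<in> carrier (Gs (SOME l. y \<in> carrier (Gs l)))" using y by (rule someI)
  have "ds (SOME l. x \<in> carrier (Gs l)) x a + ds (SOME l. y \<in> carrier (Gs l)) a y =
        ds lx x a + ds ly a y" if "a \<in> A" for a
  proof -
    have "a \<in> carrier (Gs (SOME l. x \<in> carrier (Gs l)))" "a \<in> carrier (Gs lx)"
      "a \<in> carrier (Gs (SOME l. y \<in> carrier (Gs l)))" "a \<in> carrier (Gs ly)"
      using that A_sub by auto
    then show ?thesis using ds_indep[OF 1 _ x, of a] ds_indep[OF _ 2 _ y, of a] by simp
  qed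
  moreover have "d x y = (INF a\<in>A. ds (SOME l. x \<in> carrier (Gs l)) x a + ds (SOME l. y \<in> carrier (Gs l)) a y)"
    unfolding amalg_dist_def using nc by (rule if_not_P)
  ultimately show ?thesis by (auto intro: INF_cong)
qed

lemma d_split_le:
  assumes x: "x \<in> carrier (Gs lx)" and y: "y \<in> carrier (Gs ly)"
    and nc: "\<not> (\<exists>l. x \<in> carrier (Gs l) \<and> y \<in> carrier (Gs l))" and a: "a \<in> A"
  shows "d x y \<le> ds lx x a + ds ly a y"
proof -
  have "(INF a\<in>A. ds lx x a + ds ly a y) \<le> ds lx x a + ds ly a y"
    using a x y A_sub
    by (intro cINF_lower) (auto intro!: bdd_belowI2[where m=0] add_nonneg_nonneg ds_nonneg)
  then show ?thesis using d_split[OF x y nc] by simp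
qed

lemma d_tri_e:
  assumes x: "x \<in> carrier (Gs lx)" and y: "y \<in> carrier (Gs ly)"
  shows "d x y \<le> ds lx x e + ds ly e y"
proof (cases "\<exists>l. x \<in> carrier (Gs l) \<and> y \<in> carrier (Gs l)")
  case True
  then obtain l where l: "x \<in> carrier (Gs l)" "y \<in> carrier (Gs l)" by blast
  have "d x y = ds l x y" using d_eq l by blast
  also have "\<dots> \<le> ds l x e + ds l e y" using ds_tri l e_carr by blast
  also have "\<dots> = ds lx x e + ds ly e y"
    using ds_indep[of x l e lx] ds_indep[of e l y ly] l x y e_carr by simp
  finally show ?thesis .
next
  case False then show ?thesis using d_split_le[OF x y False e_A] by simp
qed

lemma d_inv:
  assumes g: "g \<in> GG" and h: "h \<in> GG"
  shows "d (ginv g) (ginv h) \<le> d g h"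
proof (cases "\<exists>l. g \<in> carrier (Gs l) \<and> h \<in> carrier (Gs l)")
  case True
  then obtain l where l: "g \<in> carrier (Gs l)" "h \<in> carrier (Gs l)" by blast
  have "d (ginv g) (ginv h) = ds l (inv\<^bsub>Gs l\<^esub> g) (inv\<^bsub>Gs l\<^esub> h)"
    using d_eq[OF ginv_carr[OF l(1)] ginv_carr[OF l(2)]] ginv_eq l by simp
  also have "\<dots> = d g h" using ds_inv[OF l] d_eq[OF l] by simp
  finally show ?thesis by simp
next
  case False
  define lg where "lg = (SOME l. g \<in> carrier (Gs l))"
  define lh where "lh = (SOME l. h \<in> carrier (Gs l))"
  have gl: "g \<in> carrier (Gs lg)" using G_ex g lg_def by blast
  have hl: "h \<in> carrier (Gs lh)" using G_ex h lh_def by blast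
  have nc: "\<not> (\<exists>l. ginv g \<in> carrier (Gs l) \<and> ginv h \<in> carrier (Gs l))"
    using False ginv_carr_rev g h by blast
  have "d (ginv g) (ginv h) \<le> ds lg g a + ds lh a h" if a: "a \<in> A" for a
  proof -
    have aA: "inv\<^bsub>Gs lg\<^esub> a \<in> A" using inv_A a by blast
    have ia: "inv\<^bsub>Gs lh\<^esub> a = inv\<^bsub>Gs lg\<^esub> a" using inv_indep a A_sub by blast
    have "d (ginv g) (ginv h) \<le> ds lg (ginv g) (inv\<^bsub>Gs lg\<^esub> a) + ds lh (inv\<^bsub>Gs lg\<^esub> a) (ginv h)"
      using d_split_le[OF ginv_carr[OF gl] ginv_carr[OF hl] nc aA] .
    also have "\<dots> = ds lg g a + ds lh a h"
    proof -
      have al: "a \<in> carrier (Gs lg)" "a \<in> carrier (Gs lh)" using a A_sub by auto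
      show ?thesis
        using ginv_eq[OF gl] ginv_eq[OF hl] ia ds_inv[OF gl al(1)] ds_inv[OF al(2) hl] by simp
    qed
    finally show ?thesis .
  qed
  then have "d (ginv g) (ginv h) \<le> (INF a\<in>A. ds lg g a + ds lh a h)"
    using e_A by (intro cINF_greatest) auto
  also have "\<dots> = d g h" using d_split[OF gl hl False] by simp
  finally show ?thesis .
qed

lemma letter_le:
  assumes p: "snd p \<in> GG" and q: "snd q \<in> GG"
  shows "d (conv p) (conv q) \<le> letter_dist d e p q"
proof -
  obtain b1 g where pp: "p = (b1, g)" by force
  obtain b2 h where qq: "q = (b2, h)" by force
  define lg where "lg = (SOME l. g \<in> carrier (Gs l))"
  define lh where "lh = (SOME l. h \<in> carrier (Gs l))"
  have gl: "g \<in> carrier (Gs lg)" using G_ex p pp lg_def by auto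
  have hl: "h \<in> carrier (Gs lh)" using G_ex q qq lh_def by auto
  have dge: "d g e = ds lg g e" using d_eq gl e_carr by blast
  have deh: "d e h = ds lh e h" using d_eq hl e_carr by blast
  have ie: "inv\<^bsub>Gs l\<^esub> e = e" for l using ginv_eq[OF e_carr, of l] ginv_e by simp
  have dge': "ds lg g e = ds lg (ginv g) e"
    using ds_inv[OF gl e_carr] ginv_eq[OF gl] ie by simp
  have deh': "ds lh e h = ds lh e (ginv h)"
    using ds_inv[OF e_carr hl] ginv_eq[OF hl] ie by simp
  show ?thesis
  proof (cases b1; cases b2)
    assume "b1" "b2" then show ?thesis using pp qq by (simp add: conv_def letter_dist_def)
  next
    assume "b1" "\<not> b2"
    then show ?thesis using pp qq d_tri_e[OF gl ginv_carr[OF hl]] dge deh deh'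
      by (simp add: conv_def letter_dist_def)
  next
    assume "\<not> b1" "b2"
    then show ?thesis using pp qq d_tri_e[OF ginv_carr[OF gl] hl] dge deh dge'
      by (simp add: conv_def letter_dist_def)
  next
    assume "\<not> b1" "\<not> b2"
    then show ?thesis using pp qq d_inv p q by (simp add: conv_def letter_dist_def)
  qed
qed

end


context amalg begin

abbreviation "F \<equiv> FG Gs"
abbreviation "N \<equiv> normal_closure F (amalg_relators Gs)"

lemma carrier_F: "carrier F = {w. snd ` set w \<subseteq> GG - {e} \<and> free_red w = w}"
  by (simp add: FG_def free_grp_def)

lemma mult_F: "x \<otimes>\<^bsub>F\<^esub> y = free_red (x @ y)"
  by (simp add: FG_def free_grp_def)

lemma one_F: "\<one>\<^bsub>F\<^esub> = []"
  by (simp add: FG_def free_grp_def)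

lemma group_F: "group F"
  unfolding FG_def by (rule free_grp_group)

lemma free_red_single: "free_red [a] = [a]"
  by simp

lemma word_eval_single: "word_eval e [(b, g)] = (if g = e then [] else [(b, g)])"
  by (simp add: word_eval_def)

lemma word_eval_carr:
  assumes "snd ` set u \<subseteq> GG"
  shows "word_eval e u \<in> carrier F"
proof -
  have "snd ` set (filter (\<lambda>p. snd p \<noteq> e) u) \<subseteq> GG - {e}" using assms by auto
  moreover have "snd ` set (free_red (filter (\<lambda>p. snd p \<noteq> e) u)) \<subseteq> snd ` set (filter (\<lambda>p. snd p \<noteq> e) u)"
    using set_free_red by (rule image_mono)
  ultimately show ?thesis unfolding carrier_F word_eval_def by (auto simp: free_red_idem)
qed

lemma gen_carr: "g \<in> GG \<Longrightarrow> FG_gen Gs g \<in> carrier F"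
  unfolding FG_gen_def by (rule word_eval_carr) simp

lemma gen_e: "FG_gen Gs e = []"
  by (simp add: FG_gen_def word_eval_def)

lemma word_eval_id: "x \<in> carrier F \<Longrightarrow> word_eval e x = x"
proof -
  assume x: "x \<in> carrier F"
  then have "filter (\<lambda>p. snd p \<noteq> e) x = x" unfolding carrier_F by (auto intro!: filter_True)
  then show ?thesis using x unfolding word_eval_def carrier_F by simp
qed

lemma word_eval_Cons: "word_eval e (a # u) = word_eval e [a] \<otimes>\<^bsub>F\<^esub> word_eval e u"
proof (cases "snd a = e")
  case True
  then show ?thesis by (simp add: mult_F word_eval_def free_red_idem)
next
  case False
  then show ?thesis
    using free_red_right[of "[a]" "filter (\<lambda>p. snd p \<noteq> e) u"]
    by (simp add: mult_F word_eval_def)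
qed

lemma relators_carr: "amalg_relators Gs \<subseteq> carrier F"
proof
  interpret F: group F by (rule group_F)
  fix r assume "r \<in> amalg_relators Gs"
  then obtain g h l where r: "r = FG_gen Gs g \<otimes>\<^bsub>F\<^esub> FG_gen Gs h \<otimes>\<^bsub>F\<^esub> inv\<^bsub>F\<^esub> (FG_gen Gs (g \<otimes>\<^bsub>Gs l\<^esub> h))"
    and gh: "g \<in> carrier (Gs l)" "h \<in> carrier (Gs l)"
    unfolding amalg_relators_def by blast
  have "g \<otimes>\<^bsub>Gs l\<^esub> h \<in> carrier (Gs l)" using gh group.is_monoid[OF groups] monoid.m_closed by fast
  then show "r \<in> carrier F" unfolding r using gh gen_carr carr_G by simp
qed

lemma conj_carr: "{x \<otimes>\<^bsub>F\<^esub> s \<otimes>\<^bsub>F\<^esub> inv\<^bsub>F\<^esub> x | x s. x \<in> carrier F \<and> s \<in> amalg_relators Gs} \<subseteq> carrier F"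
proof -
  interpret F: group F by (rule group_F)
  show ?thesis using relators_carr by auto
qed

lemma normal_N: "N \<lhd> F"
proof -
  interpret F: group F by (rule group_F)
  show ?thesis unfolding normal_closure_def
  proof (rule F.normal_generateI[OF conj_carr])
    fix h g assume h: "h \<in> {x \<otimes>\<^bsub>F\<^esub> s \<otimes>\<^bsub>F\<^esub> inv\<^bsub>F\<^esub> x | x s. x \<in> carrier F \<and> s \<in> amalg_relators Gs}"
      and g: "g \<in> carrier F"
    then obtain x s where hs: "h = x \<otimes>\<^bsub>F\<^esub> s \<otimes>\<^bsub>F\<^esub> inv\<^bsub>F\<^esub> x" "x \<in> carrier F" "s \<in> amalg_relators Gs"
      by blast
    have s: "s \<in> carrier F" using hs relators_carr by blast
    have "g \<otimes>\<^bsub>F\<^esub> h \<otimes>\<^bsub>F\<^esub> inv\<^bsub>F\<^esub> g = (g \<otimes>\<^bsub>F\<^esub> x) \<otimes>\<^bsub>F\<^esub> s \<otimes>\<^bsub>F\<^esub> inv\<^bsub>F\<^esub> (g \<otimes>\<^bsub>F\<^esub> x)"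
      using g hs s by (simp add: F.m_assoc F.inv_mult_group)
    moreover have "g \<otimes>\<^bsub>F\<^esub> x \<in> carrier F" using g hs by simp
    ultimately show "g \<otimes>\<^bsub>F\<^esub> h \<otimes>\<^bsub>F\<^esub> inv\<^bsub>F\<^esub> g \<in> {x \<otimes>\<^bsub>F\<^esub> s \<otimes>\<^bsub>F\<^esub> inv\<^bsub>F\<^esub> x | x s. x \<in> carrier F \<and> s \<in> amalg_relators Gs}"
      using hs by blast
  qed
qed

lemma relators_N: "amalg_relators Gs \<subseteq> N"
proof
  interpret F: group F by (rule group_F)
  fix s assume s: "s \<in> amalg_relators Gs"
  then have "s = \<one>\<^bsub>F\<^esub> \<otimes>\<^bsub>F\<^esub> s \<otimes>\<^bsub>F\<^esub> inv\<^bsub>F\<^esub> \<one>\<^bsub>F\<^esub>" using relators_carr by auto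
  then have "s \<in> {x \<otimes>\<^bsub>F\<^esub> s \<otimes>\<^bsub>F\<^esub> inv\<^bsub>F\<^esub> x | x s. x \<in> carrier F \<and> s \<in> amalg_relators Gs}"
    using s F.one_closed by blast
  then show "s \<in> N" unfolding normal_closure_def by (rule generate.incl)
qed

lemma kernel_N: "kernel F (amalg_prod Gs) (amalg_phi Gs) = N"
proof -
  interpret Nn: normal N F by (rule normal_N)
  show ?thesis
  proof (rule equalityI; rule subsetI)
    fix x assume "x \<in> kernel F (amalg_prod Gs) (amalg_phi Gs)"
    then have x: "x \<in> carrier F" "N #>\<^bsub>F\<^esub> x = N"
      by (auto simp: kernel_def amalg_prod_def amalg_phi_def)
    show "x \<in> N" using Nn.rcos_self[OF x(1) Nn.subgroup_axioms] x(2) by simp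
  next
    fix x assume x: "x \<in> N"
    then have "x \<in> carrier F" using Nn.subset by blast
    moreover have "N #>\<^bsub>F\<^esub> x = N" using Nn.coset_join2[OF \<open>x \<in> carrier F\<close> Nn.subgroup_axioms x] .
    ultimately show "x \<in> kernel F (amalg_prod Gs) (amalg_phi Gs)"
      by (simp add: kernel_def amalg_prod_def amalg_phi_def)
  qed
qed

lemma phi_mult: "x \<in> carrier F \<Longrightarrow> y \<in> carrier F \<Longrightarrow>
   amalg_phi Gs (x \<otimes>\<^bsub>F\<^esub> y) = amalg_phi Gs x \<otimes>\<^bsub>amalg_prod Gs\<^esub> amalg_phi Gs y"
proof -
  interpret Nn: normal N F by (rule normal_N)
  assume "x \<in> carrier F" "y \<in> carrier F"
  then show ?thesis by (simp add: amalg_phi_def amalg_prod_def Nn.rcos_sum)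
qed

lemma phi_neg:
  assumes g: "g \<in> GG"
  shows "amalg_phi Gs (word_eval e [(False, g)]) = amalg_phi Gs (FG_gen Gs (ginv g))"
proof -
  interpret F: group F by (rule group_F)
  interpret Nn: normal N F by (rule normal_N)
  define l where "l = (SOME l. g \<in> carrier (Gs l))"
  have gl: "g \<in> carrier (Gs l)" unfolding l_def using g by (rule G_ex)
  have hl: "ginv g \<in> carrier (Gs l)" using gl by (rule ginv_carr)
  have gh: "g \<otimes>\<^bsub>Gs l\<^esub> ginv g = e"
    using ginv_eq[OF gl] group.r_inv[OF groups gl] one_eq by simp
  define x where "x = FG_gen Gs g"
  define y where "y = FG_gen Gs (ginv g)"
  have xc: "x \<in> carrier F" unfolding x_def using g by (rule gen_carr)
  have yc: "y \<in> carrier F" unfolding y_def using carr_G[OF hl] by (rule gen_carr)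
  have "x \<otimes>\<^bsub>F\<^esub> y \<otimes>\<^bsub>F\<^esub> inv\<^bsub>F\<^esub> (FG_gen Gs (g \<otimes>\<^bsub>Gs l\<^esub> ginv g)) \<in> amalg_relators Gs"
    unfolding amalg_relators_def x_def y_def using gl hl by blast
  moreover have "inv\<^bsub>F\<^esub> [] = []" using F.inv_one one_F by simp
  moreover have "x \<otimes>\<^bsub>F\<^esub> y \<otimes>\<^bsub>F\<^esub> [] = x \<otimes>\<^bsub>F\<^esub> y" using F.r_one[of "x \<otimes>\<^bsub>F\<^esub> y"] one_F xc yc by simp
  ultimately have "x \<otimes>\<^bsub>F\<^esub> y \<in> amalg_relators Gs" using gh gen_e by simp
  then have "x \<otimes>\<^bsub>F\<^esub> y \<in> N" using relators_N by blast
  then have xy: "N #>\<^bsub>F\<^esub> (x \<otimes>\<^bsub>F\<^esub> y) = N"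
    using F.coset_join2[OF _ Nn.subgroup_axioms] xc yc by simp
  define w where "w = word_eval e [(False, g)]"
  have w: "w = inv\<^bsub>F\<^esub> x"
  proof (cases "g = e")
    case True
    have "inv\<^bsub>F\<^esub> [] = []" using F.inv_one one_F by simp
    then show ?thesis unfolding w_def x_def FG_gen_def using True by (simp add: word_eval_single)
  next
    case False
    have wc: "w \<in> carrier F" unfolding w_def using g by (intro word_eval_carr) simp
    have "w \<otimes>\<^bsub>F\<^esub> x = \<one>\<^bsub>F\<^esub>" using False
      by (simp add: w_def x_def FG_gen_def word_eval_single mult_F one_F)
    then show ?thesis using wc xc by (intro F.inv_equality[symmetric])
  qed
  have "N #>\<^bsub>F\<^esub> y = N #>\<^bsub>F\<^esub> w"
  proof -
    have ic: "inv\<^bsub>F\<^esub> x \<in> carrier F" using xc by simp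
    have "y = inv\<^bsub>F\<^esub> x \<otimes>\<^bsub>F\<^esub> (x \<otimes>\<^bsub>F\<^esub> y)"
      using xc yc by (simp add: F.m_assoc[symmetric])
    then have "N #>\<^bsub>F\<^esub> y = (N #>\<^bsub>F\<^esub> inv\<^bsub>F\<^esub> x) <#>\<^bsub>F\<^esub> (N #>\<^bsub>F\<^esub> (x \<otimes>\<^bsub>F\<^esub> y))"
      using xc yc ic by (simp add: Nn.rcos_sum)
    also have "\<dots> = (N #>\<^bsub>F\<^esub> inv\<^bsub>F\<^esub> x) <#>\<^bsub>F\<^esub> (N #>\<^bsub>F\<^esub> \<one>\<^bsub>F\<^esub>)"
      using xy Nn.subset F.coset_mult_one by simp
    also have "\<dots> = N #>\<^bsub>F\<^esub> inv\<^bsub>F\<^esub> x"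
      using ic by (simp add: Nn.rcos_sum)
    finally show ?thesis using w by simp
  qed
  then show ?thesis unfolding amalg_phi_def w_def y_def by simp
qed

lemma word_prod_Cons: "amalg_word_prod Gs (g # \<alpha>) =
   amalg_phi Gs (FG_gen Gs g) \<otimes>\<^bsub>amalg_prod Gs\<^esub> amalg_word_prod Gs \<alpha>"
  by (simp add: amalg_word_prod_def)

lemma word_prod_conv:
  "snd ` set u \<subseteq> GG \<Longrightarrow> amalg_word_prod Gs (map conv u) = amalg_phi Gs (word_eval e u)"
proof (induction u)
  case Nil
  interpret Nn: normal N F by (rule normal_N)
  have "N #>\<^bsub>F\<^esub> [] = N" using Nn.subset Nn.coset_mult_one one_F by metis
  then show ?case by (simp add: amalg_word_prod_def amalg_prod_def amalg_phi_def word_eval_def)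
next
  case (Cons a u)
  have a: "snd a \<in> GG" and u: "snd ` set u \<subseteq> GG" using Cons.prems by auto
  have 1: "amalg_phi Gs (FG_gen Gs (conv a)) = amalg_phi Gs (word_eval e [a])"
  proof (cases "fst a")
    case True then show ?thesis by (cases a) (simp add: conv_def FG_gen_def)
  next
    case False then show ?thesis using phi_neg[OF a] by (cases a) (simp add: conv_def)
  qed
  have "amalg_word_prod Gs (map conv (a # u)) =
        amalg_phi Gs (word_eval e [a]) \<otimes>\<^bsub>amalg_prod Gs\<^esub> amalg_phi Gs (word_eval e u)"
    using Cons.IH[OF u] 1 by (simp add: word_prod_Cons)
  also have "\<dots> = amalg_phi Gs (word_eval e (a # u))"
    using word_eval_Cons[of a u] phi_mult[OF word_eval_carr word_eval_carr, of "[a]" u] a u by simp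
  finally show ?case .
qed

end


context amalg begin

lemma phi_coset:
  assumes x: "x \<in> carrier F" and f: "f \<in> N #>\<^bsub>F\<^esub> x"
  shows "amalg_phi Gs f = N #>\<^bsub>F\<^esub> x"
proof -
  interpret F: group F by (rule group_F)
  interpret Nn: normal N F by (rule normal_N)
  show ?thesis unfolding amalg_phi_def using F.repr_independence[OF f x Nn.subgroup_axioms] by simp
qed

lemma carrier_P: "carrier (F Mod N) = (\<lambda>x. N #>\<^bsub>F\<^esub> x) ` carrier F"
  by (rule carrier_FactGroup)

lemma psi_id:
  assumes C: "C \<in> carrier (F Mod N)"
  shows "the_elem (amalg_phi Gs ` C) = C"
proof -
  interpret F: group F by (rule group_F)
  interpret Nn: normal N F by (rule normal_N)
  obtain x where x: "x \<in> carrier F" and Cx: "C = N #>\<^bsub>F\<^esub> x" using C carrier_P by auto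
  have "x \<in> C" using Cx F.rcos_self[OF x Nn.subgroup_axioms] by simp
  moreover have "amalg_phi Gs f = C" if "f \<in> C" for f using phi_coset[OF x] that Cx by simp
  ultimately have "amalg_phi Gs ` C = {C}" by blast
  then show ?thesis by simp
qed

lemma word_eval_pad_r: "word_eval e (u @ replicate k (b, e)) = word_eval e u"
  by (simp add: word_eval_def)

lemma word_eval_pad_l: "word_eval e (replicate k (b, e) @ u) = word_eval e u"
  by (simp add: word_eval_def)

lemma letter_nonneg: "snd p \<in> GG \<Longrightarrow> snd q \<in> GG \<Longrightarrow> 0 \<le> letter_dist d e p q"
  using d_nonneg carr_G[OF e_carr] by (simp add: letter_dist_def add_nonneg_nonneg)

lemma rho_nonneg: "length u = length v \<Longrightarrow> snd ` set u \<subseteq> GG \<Longrightarrow> snd ` set v \<subseteq> GG \<Longrightarrow>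
  0 \<le> word_rho d e u v"
  unfolding word_rho_def by (intro sum_nonneg letter_nonneg) (auto simp: set_conv_nth)

definition TT :: "(bool \<times> 'a) list \<Rightarrow> (bool \<times> 'a) list \<Rightarrow> real set" where
  "TT x y = {word_rho d e u v | u v. length u = length v \<and>
            snd ` set u \<subseteq> GG \<and> snd ` set v \<subseteq> GG \<and> word_eval e u = x \<and> word_eval e v = y}"

lemma dF_eq: "graev_free GG e d x y = Inf (TT x y)"
  by (simp add: graev_free_def TT_def)

lemma carrF_G: "x \<in> carrier F \<Longrightarrow> snd ` set x \<subseteq> GG"
  by (auto simp: carrier_F)

lemma TT_ne: "x \<in> carrier F \<Longrightarrow> y \<in> carrier F \<Longrightarrow> TT x y \<noteq> {}"
proof -
  assume x: "x \<in> carrier F" and y: "y \<in> carrier F"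
  define u where "u = x @ replicate (length y) (True, e)"
  define v where "v = replicate (length x) (True, e) @ y"
  have "length u = length v" by (simp add: u_def v_def)
  moreover have "snd ` set u \<subseteq> GG" "snd ` set v \<subseteq> GG"
    using carrF_G[OF x] carrF_G[OF y] carr_G[OF e_carr] by (auto simp: u_def v_def)
  moreover have "word_eval e u = x" "word_eval e v = y"
    using word_eval_id[OF x] word_eval_id[OF y] by (simp_all add: u_def v_def word_eval_pad_r word_eval_pad_l)
  ultimately have "word_rho d e u v \<in> TT x y" unfolding TT_def by blast
  then show ?thesis by blast
qed

lemma TT_bdd: "bdd_below (TT x y)"
  unfolding TT_def by (rule bdd_belowI[where m=0]) (auto intro: rho_nonneg)

lemma TT_nonneg: "x \<in> carrier F \<Longrightarrow> y \<in> carrier F \<Longrightarrow> 0 \<le> Inf (TT x y)"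
  using TT_ne by (intro cInf_greatest) (auto simp: TT_def intro: rho_nonneg)

definition S1 :: "(bool \<times> 'a) list set \<Rightarrow> (bool \<times> 'a) list set \<Rightarrow> real set" where
  "S1 C1 C2 = {(\<Sum>i<length \<alpha>1. d (\<alpha>1 ! i) (\<alpha>2 ! i)) | \<alpha>1 \<alpha>2.
            length \<alpha>1 = length \<alpha>2 \<and> set \<alpha>1 \<subseteq> GG \<and> set \<alpha>2 \<subseteq> GG \<and>
            amalg_word_prod Gs \<alpha>1 = C1 \<and> amalg_word_prod Gs \<alpha>2 = C2}"

lemma S1_bdd: "bdd_below (S1 C1 C2)"
  unfolding S1_def by (rule bdd_belowI[where m=0]) (auto intro!: sum_nonneg d_nonneg)

lemma conv_map: "snd ` set u \<subseteq> GG \<Longrightarrow> set (map conv u) \<subseteq> GG"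
  using conv_G by auto

lemma S1_elem:
  assumes "length u = length v" "snd ` set u \<subseteq> GG" "snd ` set v \<subseteq> GG"
    "amalg_phi Gs (word_eval e u) = C1" "amalg_phi Gs (word_eval e v) = C2"
  shows "(\<Sum>i<length u. d (conv (u ! i)) (conv (v ! i))) \<in> S1 C1 C2"
proof -
  have "(\<Sum>i<length u. d (conv (u ! i)) (conv (v ! i))) =
        (\<Sum>i<length (map conv u). d (map conv u ! i) (map conv v ! i))"
    using assms(1) by simp
  moreover have "amalg_word_prod Gs (map conv u) = C1"
    using word_prod_conv[OF assms(2)] assms(4) by simp
  moreover have "amalg_word_prod Gs (map conv v) = C2"
    using word_prod_conv[OF assms(3)] assms(5) by simp
  moreover have "length (map conv u) = length (map conv v)" using assms(1) by simp
  ultimately show ?thesis unfolding S1_def using conv_map[OF assms(2)] conv_map[OF assms(3)]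
    by (intro CollectI exI[of _ "map conv u"] exI[of _ "map conv v"]) simp
qed

lemma S1_ne:
  assumes C1: "C1 \<in> carrier (F Mod N)" and C2: "C2 \<in> carrier (F Mod N)"
  shows "S1 C1 C2 \<noteq> {}"
proof -
  interpret F: group F by (rule group_F)
  interpret Nn: normal N F by (rule normal_N)
  obtain x where x: "x \<in> carrier F" and Cx: "C1 = N #>\<^bsub>F\<^esub> x" using C1 carrier_P by auto
  obtain y where y: "y \<in> carrier F" and Cy: "C2 = N #>\<^bsub>F\<^esub> y" using C2 carrier_P by auto
  define u where "u = x @ replicate (length y) (True, e)"
  define v where "v = replicate (length x) (True, e) @ y"
  have l: "length u = length v" by (simp add: u_def v_def)
  moreover have s: "snd ` set u \<subseteq> GG" "snd ` set v \<subseteq> GG"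
    using carrF_G[OF x] carrF_G[OF y] carr_G[OF e_carr] by (auto simp: u_def v_def)
  moreover have "word_eval e u = x" "word_eval e v = y"
    using word_eval_id[OF x] word_eval_id[OF y] by (simp_all add: u_def v_def word_eval_pad_r word_eval_pad_l)
  then have "amalg_phi Gs (word_eval e u) = C1" "amalg_phi Gs (word_eval e v) = C2"
    using Cx Cy by (simp_all add: amalg_phi_def)
  ultimately show ?thesis using S1_elem by blast
qed

lemma metric_eq:
  assumes C1: "C1 \<in> carrier (F Mod N)" and C2: "C2 \<in> carrier (F Mod N)"
  shows "graev_amalg Gs ds A C1 C2 = factor_metric (graev_free GG e d) C1 C2"
proof -
  interpret F: group F by (rule group_F)
  interpret Nn: normal N F by (rule normal_N)
  define S2 where "S2 = {graev_free GG e d x y | x y. x \<in> C1 \<and> y \<in> C2}"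
  have g1: "graev_amalg Gs ds A C1 C2 = Inf (S1 C1 C2)" by (simp add: graev_amalg_def S1_def)
  have g2: "factor_metric (graev_free GG e d) C1 C2 = Inf S2" by (simp add: factor_metric_def S2_def)
  obtain x0 where x0: "x0 \<in> carrier F" and Cx: "C1 = N #>\<^bsub>F\<^esub> x0" using C1 carrier_P by auto
  obtain y0 where y0: "y0 \<in> carrier F" and Cy: "C2 = N #>\<^bsub>F\<^esub> y0" using C2 carrier_P by auto
  have C1c: "C1 \<subseteq> carrier F" using Cx x0 F.r_coset_subset_G Nn.subset by blast
  have C2c: "C2 \<subseteq> carrier F" using Cy y0 F.r_coset_subset_G Nn.subset by blast
  have x0C: "x0 \<in> C1" using Cx F.rcos_self[OF x0 Nn.subgroup_axioms] by simp
  have y0C: "y0 \<in> C2" using Cy F.rcos_self[OF y0 Nn.subgroup_axioms] by simp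
  have S2ne: "S2 \<noteq> {}" unfolding S2_def using x0C y0C by blast
  have S2bdd: "bdd_below S2" unfolding S2_def
    using TT_nonneg C1c C2c by (intro bdd_belowI[where m=0]) (auto simp: dF_eq)
  have le1: "Inf (S1 C1 C2) \<le> Inf S2"
  proof (rule cInf_greatest[OF S2ne])
    fix s assume "s \<in> S2"
    then obtain x y where s: "s = graev_free GG e d x y" and x: "x \<in> C1" and y: "y \<in> C2"
      unfolding S2_def by blast
    have xc: "x \<in> carrier F" and yc: "y \<in> carrier F" using x y C1c C2c by auto
    have "Inf (S1 C1 C2) \<le> Inf (TT x y)"
    proof (rule cInf_greatest[OF TT_ne[OF xc yc]])
      fix r assume "r \<in> TT x y"
      then obtain u v where r: "r = word_rho d e u v" and l: "length u = length v"
        and su: "snd ` set u \<subseteq> GG" and sv: "snd ` set v \<subseteq> GG"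
        and eu: "word_eval e u = x" and ev: "word_eval e v = y"
        unfolding TT_def by blast
      have "amalg_phi Gs (word_eval e u) = C1" using eu phi_coset[OF x0] x Cx by simp
      moreover have "amalg_phi Gs (word_eval e v) = C2" using ev phi_coset[OF y0] y Cy by simp
      ultimately have mem: "(\<Sum>i<length u. d (conv (u ! i)) (conv (v ! i))) \<in> S1 C1 C2"
        using S1_elem l su sv by blast
      have "(\<Sum>i<length u. d (conv (u ! i)) (conv (v ! i))) \<le> r"
        unfolding r word_rho_def
      proof (rule sum_mono)
        fix i assume "i \<in> {..<length u}"
        then have "snd (u ! i) \<in> GG" "snd (v ! i) \<in> GG" using su sv l by (auto simp: set_conv_nth)
        then show "d (conv (u ! i)) (conv (v ! i)) \<le> letter_dist d e (u ! i) (v ! i)" by (rule letter_le)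
      qed
      then show "Inf (S1 C1 C2) \<le> r" using cInf_lower[OF mem S1_bdd] by linarith
    qed
    then show "Inf (S1 C1 C2) \<le> s" using s dF_eq by simp
  qed
  have le2: "Inf S2 \<le> Inf (S1 C1 C2)"
  proof (rule cInf_greatest[OF S1_ne[OF C1 C2]])
    fix s assume "s \<in> S1 C1 C2"
    then obtain \<alpha>1 \<alpha>2 where s: "s = (\<Sum>i<length \<alpha>1. d (\<alpha>1 ! i) (\<alpha>2 ! i))"
      and l: "length \<alpha>1 = length \<alpha>2" and a1: "set \<alpha>1 \<subseteq> GG" and a2: "set \<alpha>2 \<subseteq> GG"
      and p1: "amalg_word_prod Gs \<alpha>1 = C1" and p2: "amalg_word_prod Gs \<alpha>2 = C2"
      unfolding S1_def by blast
    define u where "u = map (Pair True) \<alpha>1"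
    define v where "v = map (Pair True) \<alpha>2"
    have su: "snd ` set u \<subseteq> GG" and sv: "snd ` set v \<subseteq> GG" using a1 a2 by (auto simp: u_def v_def)
    have cu: "map conv u = \<alpha>1" and cv: "map conv v = \<alpha>2"
      by (simp_all add: u_def v_def conv_def comp_def)
    define x where "x = word_eval e u"
    define y where "y = word_eval e v"
    have xc: "x \<in> carrier F" unfolding x_def using su by (rule word_eval_carr)
    have yc: "y \<in> carrier F" unfolding y_def using sv by (rule word_eval_carr)
    have "N #>\<^bsub>F\<^esub> x = C1" using word_prod_conv[OF su] cu p1 by (simp add: x_def amalg_phi_def)
    then have xC: "x \<in> C1" using F.rcos_self[OF xc Nn.subgroup_axioms] by simp
    have "N #>\<^bsub>F\<^esub> y = C2" using word_prod_conv[OF sv] cv p2 by (simp add: y_def amalg_phi_def)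
    then have yC: "y \<in> C2" using F.rcos_self[OF yc Nn.subgroup_axioms] by simp
    have rho: "word_rho d e u v = s"
      unfolding s word_rho_def using l by (simp add: u_def v_def letter_dist_def)
    have luv: "length u = length v" using l by (simp add: u_def v_def)
    have "word_rho d e u v \<in> TT x y" unfolding TT_def x_def y_def using luv su sv
      by (intro CollectI exI[of _ u] exI[of _ v]) simp
    then have "Inf (TT x y) \<le> s" using cInf_lower[OF _ TT_bdd] rho by metis
    moreover have "Inf (TT x y) \<in> S2" unfolding S2_def using xC yC
      by (intro CollectI exI[of _ x] exI[of _ y]) (simp add: dF_eq)
    ultimately show "Inf S2 \<le> s" using cInf_lower[OF _ S2bdd] by fastforce
  qed
  show ?thesis using g1 g2 le1 le2 by simp
qed

end


theorem mainTheorem4: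
  fixes Gs :: "'i \<Rightarrow> 'a monoid"
    and ds :: "'i \<Rightarrow> 'a \<Rightarrow> 'a \<Rightarrow> real"
    and A :: "'a set"
  assumes groups: "\<And>l. group (Gs l)"
    and metrics: "\<And>l. inv_metric (Gs l) (ds l)"
    and subgrp: "\<And>l. subgroup A (Gs l)"
    and common_mult: "\<And>l1 l2 a b. a \<in> A \<Longrightarrow> b \<in> A \<Longrightarrow> a \<otimes>\<^bsub>Gs l1\<^esub> b = a \<otimes>\<^bsub>Gs l2\<^esub> b"
    and closed: "\<And>l. metric_closed_in (carrier (Gs l)) (ds l) A"
    and inter: "\<And>l1 l2. l1 \<noteq> l2 \<Longrightarrow> carrier (Gs l1) \<inter> carrier (Gs l2) = A"
    and agree: "\<And>l1 l2 a b. a \<in> A \<Longrightarrow> b \<in> A \<Longrightarrow> ds l1 a b = ds l2 a b"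
  shows "let F = FG Gs; P = amalg_prod Gs; \<phi> = amalg_phi Gs; N = kernel F P \<phi>;
             dF = graev_free (amalg_set Gs) (amalg_unit Gs) (amalg_dist Gs ds A);
             \<psi> = (\<lambda>C. the_elem (\<phi> ` C))
         in \<psi> \<in> iso (F Mod N) P \<and>
            (\<forall>C1\<in>carrier (F Mod N). \<forall>C2\<in>carrier (F Mod N).
               graev_amalg Gs ds A (\<psi> C1) (\<psi> C2) = factor_metric dF C1 C2)"
proof -
  interpret amalg Gs ds A
    by (rule amalg.intro[OF groups metrics subgrp common_mult inter agree])
  interpret Nn: normal N F by (rule normal_N)
  interpret Q: group "F Mod N" by (rule Nn.factorgroup_is_group)
  define \<psi> where "\<psi> = (\<lambda>C. the_elem (amalg_phi Gs ` C))"
  have psi: "\<psi> C = C" if "C \<in> carrier (F Mod N)" for C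
    unfolding \<psi>_def using that by (rule psi_id)
  have hom: "\<psi> \<in> hom (F Mod N) (F Mod N)"
    unfolding hom_def using psi by (auto simp del: mult_FactGroup)
  have bij: "bij_betw \<psi> (carrier (F Mod N)) (carrier (F Mod N))"
    using bij_betw_cong[of "carrier (F Mod N)" \<psi> id "carrier (F Mod N)"] psi bij_betw_id by simp
  have iso: "\<psi> \<in> iso (F Mod N) (F Mod N)" unfolding iso_def using hom bij by simp
  have met: "\<forall>C1\<in>carrier (F Mod N). \<forall>C2\<in>carrier (F Mod N).
      graev_amalg Gs ds A (\<psi> C1) (\<psi> C2) = factor_metric (graev_free GG e d) C1 C2"
    using psi metric_eq by simp
  show ?thesis
    unfolding Let_def kernel_N using iso met
    by (simp add: amalg_prod_def \<psi>_def)
qed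


end
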